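(* Let $N \ge 1$ and let $f_N(t) = \sum_{n=1}^N c_n e^{\alpha_n t}$ with real coefficients $c_n$ and real rate constants $\alpha_n$ that are pairwise distinct and all nonzero, and assume $f_N(t) \ge 0$ for all $t \ge 0$. Let $t_1,\dots,t_{2N}$ be distinct nonnegative reals. For $k \ge 0$ let $$I_{(k)}(t) := \int_0^{t}\int_0^{t^{(1)}}\cdots\int_0^{t^{(k)}} f_N(t^{(k+1)})\, dt^{(k+1)} \cdots dt^{(1)}$$ denote the $(k+1)$-fold iterated integral of $f_N$ from $0$ (so $I_{(0)}(t)=\int_0^t f_N(s)\,ds$). Then the data $\{f_N(t_i) : i = 1,\dots,2N\}$ together with $\{I_{(k)}(t_i) : k = 0,1,\dots,N,\ i = 1,\dots,2N\}$ uniquely determine the coefficients $c_n$ and the rate constants $\alpha_n$, $n = 1,\dots,N$. *)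

theory Defs
  imports "HOL-Analysis.Analysis"
begin

definition expsum :: "nat \<Rightarrow> (nat \<Rightarrow> real) \<Rightarrow> (nat \<Rightarrow> real) \<Rightarrow> real \<Rightarrow> real" where
  "expsum N c \<alpha> t = (\<Sum>n=1..N. c n * exp (\<alpha> n * t))"

fun iter_int :: "(real \<Rightarrow> real) \<Rightarrow> nat \<Rightarrow> real \<Rightarrow> real" where
  "iter_int f 0 t = integral {0..t} f"
| "iter_int f (Suc k) t = integral {0..t} (iter_int f k)"

end

theory Submission
  imports Defs
begin

lemma rolle_step:
  fixes h h' :: "real \<Rightarrow> real"
  assumes der: "\<And>x. (h has_real_derivative h' x) (at x)"
    and "a < b" "h a = 0" "h b = 0"
  shows "\<exists>w. a < w \<and> w < b \<and> h' w = 0"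
proof -
  have cont: "continuous_on {a..b} h"
    using der by (meson DERIV_isCont continuous_at_imp_continuous_on)
  have "\<exists>z. a < z \<and> z < b \<and> (\<lambda>v. v * h' z) = (\<lambda>v. 0)"
    apply (rule Rolle_deriv[OF assms(2) _ cont])
    using assms apply simp
    using der unfolding has_field_derivative_def by (simp add: mult.commute[of _ "h' _"])
  then obtain z where "a < z" "z < b" "(\<lambda>v. v * h' z) = (\<lambda>v. 0)" by blast
  then have "h' z = 0" by (metis mult_1)
  with \<open>a < z\<close> \<open>z < b\<close> show ?thesis by blast
qed

lemma rolle_multi:
  fixes h h' :: "real \<Rightarrow> real"
  assumes der: "\<And>x. (h has_real_derivative h' x) (at x)"
    and fin: "finite Z"
  shows "(\<forall>z\<in>Z. h z = 0) \<longrightarrow> (\<exists>Z'. finite Z' \<and> card Z \<le> card Z' + 1 \<and> Z' \<inter> Z = {}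
           \<and> (\<forall>z\<in>Z'. h' z = 0) \<and> (\<forall>z\<in>Z'. \<exists>a\<in>Z. z < a))"
  using fin
proof (induct Z rule: finite_linorder_max_induct)
  case empty
  then show ?case by (intro impI exI[of _ "{}"]) simp
next
  case (insert b A)
  show ?case
  proof
    assume z: "\<forall>z\<in>insert b A. h z = 0"
    show "\<exists>Z'. finite Z' \<and> card (insert b A) \<le> card Z' + 1 \<and> Z' \<inter> insert b A = {}
           \<and> (\<forall>z\<in>Z'. h' z = 0) \<and> (\<forall>z\<in>Z'. \<exists>a\<in>insert b A. z < a)"
    proof (cases "A = {}")
      case True
      then show ?thesis by (rule_tac x="{}" in exI) simp
    next
      case False
      from insert z obtain Z' where Z': "finite Z'" "card A \<le> card Z' + 1" "Z' \<inter> A = {}"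
        "\<forall>z\<in>Z'. h' z = 0" "\<forall>z\<in>Z'. \<exists>a\<in>A. z < a" by auto
      have mA: "Max A \<in> A" using False insert by simp
      have "Max A < b" using mA insert by auto
      then obtain w where w: "Max A < w" "w < b" "h' w = 0"
        using rolle_step[OF der] z mA by blast
      have bA: "b \<notin> A" using insert by auto
      have wZ': "w \<notin> Z'"
      proof
        assume "w \<in> Z'"
        then obtain a where "a \<in> A" "w < a" using Z' by blast
        then have "a \<le> Max A" using insert by simp
        then show False using w \<open>w < a\<close> by simp
      qed
      have wA: "w \<notin> A"
      proof
        assume "w \<in> A" then have "w \<le> Max A" using insert by simp
        then show False using w by simp
      qed
      have bZ': "b \<notin> Z'"
      proof
        assume "b \<in> Z'"
        then obtain a where "a \<in> A" "b < a" using Z' by blast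
        then show False using insert by auto
      qed
      show ?thesis
        apply (rule_tac x="insert w Z'" in exI)
        using Z' w wZ' wA bZ' bA insert by auto
    qed
  qed
qed

lemma exp_zero:
  fixes J :: "'a set"
  assumes "finite J"
  shows "\<forall>a (b::'a\<Rightarrow>real) (Z::real set). inj_on b J \<longrightarrow> finite Z \<longrightarrow> card J \<le> card Z \<longrightarrow>
          (\<forall>z\<in>Z. (\<Sum>j\<in>J. a j * exp (b j * z)) = 0) \<longrightarrow> (\<forall>j\<in>J. a j = 0)"
  using assms
proof (induct J rule: finite_induct)
  case empty
  then show ?case by simp
next
  case (insert j0 J0)
  show ?case
  proof (intro allI impI)
    fix a b and Z :: "real set"
    assume inj: "inj_on b (insert j0 J0)" and fZ: "finite Z"
      and cZ: "card (insert j0 J0) \<le> card Z"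
      and zs: "\<forall>z\<in>Z. (\<Sum>j\<in>insert j0 J0. a j * exp (b j * z)) = 0"
    define k where "k t = a j0 + (\<Sum>j\<in>J0. a j * exp ((b j - b j0) * t))" for t
    define k' where "k' t = (\<Sum>j\<in>J0. a j * (b j - b j0) * exp ((b j - b j0) * t))" for t
    have der: "(k has_real_derivative k' x) (at x)" for x
      unfolding k_def k'_def
      by (auto intro!: derivative_eq_intros DERIV_sum simp: algebra_simps)
    have kz: "\<forall>z\<in>Z. k z = 0"
    proof
      fix z assume "z \<in> Z"
      have "exp (- (b j0 * z)) * (\<Sum>j\<in>insert j0 J0. a j * exp (b j * z)) = k z"
        unfolding k_def using insert(1,2)
        by (simp add: sum_distrib_left algebra_simps exp_add[symmetric] exp_diff[symmetric])
      then show "k z = 0" using zs \<open>z \<in> Z\<close> by simp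
    qed
    obtain Z' where Z': "finite Z'" "card Z \<le> card Z' + 1" "\<forall>z\<in>Z'. k' z = 0"
      using rolle_multi[OF der fZ] kz by blast
    have inj': "inj_on (\<lambda>j. b j - b j0) J0"
      using inj by (auto simp: inj_on_def)
    have "card J0 \<le> card Z'" using cZ Z'(2) insert(1,2) by simp
    then have "\<forall>j\<in>J0. a j * (b j - b j0) = 0"
      using insert(3)[rule_format, OF inj' Z'(1), of "\<lambda>j. a j * (b j - b j0)"] Z'(3)
      unfolding k'_def by (simp add: mult.assoc)
    moreover have "\<forall>j\<in>J0. b j \<noteq> b j0"
      using inj insert(2) by (auto simp: inj_on_def)
    ultimately have a0: "\<forall>j\<in>J0. a j = 0" by simp
    have "Z \<noteq> {}" using cZ fZ insert(1) by auto
    then obtain z where "z \<in> Z" by blast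
    have "(\<Sum>j\<in>insert j0 J0. a j * exp (b j * z)) = a j0 * exp (b j0 * z)"
      using a0 insert(1,2) by simp
    then have "a j0 * exp (b j0 * z) = 0" using zs \<open>z \<in> Z\<close> by simp
    then have "a j0 = 0" by simp
    with a0 show "\<forall>j\<in>insert j0 J0. a j = 0" by simp
  qed
qed

definition FF :: "nat \<Rightarrow> (nat \<Rightarrow> real) \<Rightarrow> (nat \<Rightarrow> real) \<Rightarrow> real \<Rightarrow> real" where
  "FF N c \<alpha> t = (\<Sum>n=1..N. c n / \<alpha> n * (exp (\<alpha> n * t) - 1))"

lemma FF_deriv:
  assumes "\<forall>n\<in>{1..N}. \<alpha> n \<noteq> 0"
  shows "(FF N c \<alpha> has_real_derivative expsum N c \<alpha> x) (at x)"
proof -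
  have "(FF N c \<alpha> has_real_derivative (\<Sum>n=1..N. c n / \<alpha> n * (\<alpha> n * exp (\<alpha> n * x)))) (at x)"
    unfolding FF_def using assms by (auto intro!: derivative_eq_intros DERIV_sum)
  also have "(\<Sum>n=1..N. c n / \<alpha> n * (\<alpha> n * exp (\<alpha> n * x))) = expsum N c \<alpha> x"
    unfolding expsum_def using assms by (intro sum.cong) auto
  finally show ?thesis .
qed

lemma FF_int:
  assumes "\<forall>n\<in>{1..N}. \<alpha> n \<noteq> 0" "t \<ge> 0"
  shows "iter_int (expsum N c \<alpha>) 0 t = FF N c \<alpha> t"
proof -
  have "(expsum N c \<alpha> has_integral (FF N c \<alpha> t - FF N c \<alpha> 0)) {0..t}"
    apply (rule fundamental_theorem_of_calculus[OF assms(2)])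
    using FF_deriv[OF assms(1)]
    by (metis has_field_derivative_at_within has_real_derivative_iff_has_vector_derivative)
  moreover have "FF N c \<alpha> 0 = 0" unfolding FF_def by simp
  ultimately show ?thesis by (simp add: integral_unique)
qed

theorem theorem2:
  fixes N :: nat and c \<alpha> c' \<alpha>' :: "nat \<Rightarrow> real" and tt :: "nat \<Rightarrow> real"
  assumes "N \<ge> 1"
    and "inj_on \<alpha> {1..N}" and "\<forall>n\<in>{1..N}. \<alpha> n \<noteq> 0" and "\<forall>n\<in>{1..N}. c n \<noteq> 0"
    and "\<forall>t\<ge>0. expsum N c \<alpha> t \<ge> 0"
    and "inj_on \<alpha>' {1..N}" and "\<forall>n\<in>{1..N}. \<alpha>' n \<noteq> 0" and "\<forall>n\<in>{1..N}. c' n \<noteq> 0"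
    and "\<forall>t\<ge>0. expsum N c' \<alpha>' t \<ge> 0"
    and "inj_on tt {1..2*N}" and "\<forall>i\<in>{1..2*N}. tt i \<ge> 0"
    and "\<forall>i\<in>{1..2*N}. expsum N c \<alpha> (tt i) = expsum N c' \<alpha>' (tt i)"
    and "\<forall>k\<le>N. \<forall>i\<in>{1..2*N}.
           iter_int (expsum N c \<alpha>) k (tt i) = iter_int (expsum N c' \<alpha>') k (tt i)"
  shows "\<exists>\<sigma>. bij_betw \<sigma> {1..N} {1..N} \<and> (\<forall>n\<in>{1..N}. c' n = c (\<sigma> n) \<and> \<alpha>' n = \<alpha> (\<sigma> n))"
proof -
  note A = assms
  define H where "H t = FF N c \<alpha> t - FF N c' \<alpha>' t" for t
  define g where "g t = expsum N c \<alpha> t - expsum N c' \<alpha>' t" for t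
  have derH: "(H has_real_derivative g x) (at x)" for x
    unfolding H_def g_def by (intro derivative_intros FF_deriv A(3) A(7))
  define T where "T = tt ` {1..2*N}"
  have cT: "card T = 2*N" unfolding T_def using A(10) by (simp add: card_image)
  have fT: "finite T" unfolding T_def by simp
  define Z where "Z = insert 0 T"
  have fZ: "finite Z" using fT Z_def by simp
  have cZ: "2*N \<le> card Z" unfolding Z_def using cT fT by (metis card_insert_le)
  have HZ: "\<forall>z\<in>Z. H z = 0"
  proof
    fix z assume "z \<in> Z"
    then consider "z = 0" | i where "i \<in> {1..2*N}" "z = tt i" unfolding Z_def T_def by auto
    then show "H z = 0"
    proof cases
      case 1 then show ?thesis unfolding H_def FF_def by simp
    next
      case 2
      have "iter_int (expsum N c \<alpha>) 0 (tt i) = iter_int (expsum N c' \<alpha>') 0 (tt i)"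
        using A(13) 2(1) by blast
      moreover have "tt i \<ge> 0" using A(11) 2(1) by blast
      ultimately show ?thesis unfolding H_def 2(2)
        using FF_int[OF A(3)] FF_int[OF A(7)] by simp
    qed
  qed
  obtain Z' where Z': "finite Z'" "card Z \<le> card Z' + 1" "Z' \<inter> Z = {}" "\<forall>z\<in>Z'. g z = 0"
    using rolle_multi[OF derH fZ] HZ by blast
  define G where "G = Z' \<union> T"
  have fG: "finite G" using G_def Z'(1) fT by simp
  have "card G = card Z' + card T" unfolding G_def
    using Z'(1,3) fT Z_def by (subst card_Un_disjoint) auto
  then have cG: "2*N \<le> card G" using cT cZ Z'(2) A(1) by linarith
  have gG: "\<forall>z\<in>G. g z = 0"
    using Z'(4) A(12) unfolding G_def T_def g_def by auto
  define B where "B = \<alpha> ` {1..N} \<union> \<alpha>' ` {1..N}"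
  have fB: "finite B" unfolding B_def by simp
  have cB: "card B \<le> 2*N"
  proof -
    have "card B \<le> card (\<alpha> ` {1..N}) + card (\<alpha>' ` {1..N})" unfolding B_def by (rule card_Un_le)
    also have "\<dots> \<le> N + N" by (metis add_mono card_atLeastAtMost card_image_le diff_Suc_1 finite_atLeastAtMost)
    finally show ?thesis by simp
  qed
  define a where "a \<beta> = sum c {n\<in>{1..N}. \<alpha> n = \<beta>} - sum c' {n\<in>{1..N}. \<alpha>' n = \<beta>}" for \<beta>
  have grp: "(\<Sum>\<beta>\<in>B. sum d {n\<in>{1..N}. \<gamma> n = \<beta>} * exp (id \<beta> * t)) = expsum N d \<gamma> t"
    if "\<gamma> ` {1..N} \<subseteq> B" for d \<gamma> t
  proof -
    have "(\<Sum>\<beta>\<in>B. sum d {n\<in>{1..N}. \<gamma> n = \<beta>} * exp (id \<beta> * t))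
        = (\<Sum>\<beta>\<in>B. sum (\<lambda>n. d n * exp (\<gamma> n * t)) {n\<in>{1..N}. \<gamma> n = \<beta>})"
      by (intro sum.cong refl) (auto simp: sum_distrib_right)
    also have "\<dots> = expsum N d \<gamma> t"
      unfolding expsum_def by (rule sum.group[OF _ fB that]) simp
    finally show ?thesis .
  qed
  have repr: "(\<Sum>\<beta>\<in>B. a \<beta> * exp (id \<beta> * t)) = g t" for t
    unfolding a_def g_def left_diff_distrib sum_subtractf
    by (subst grp, simp add: B_def, subst grp, auto simp: B_def)
  have a0: "\<forall>\<beta>\<in>B. a \<beta> = 0"
  proof -
    have c1: "card B \<le> card G" using cB cG by linarith
    have c2: "\<forall>z\<in>G. (\<Sum>\<beta>\<in>B. a \<beta> * exp (id \<beta> * z)) = 0" using gG repr by simp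
    show ?thesis using exp_zero[OF fB, rule_format, of id G a, OF inj_on_id fG c1] c2 by blast
  qed
  have key: "\<exists>m\<in>{1..N}. \<alpha> m = \<alpha>' n \<and> c m = c' n" if n: "n \<in> {1..N}" for n
  proof -
    have "\<alpha>' n \<in> B" using n unfolding B_def by blast
    then have "a (\<alpha>' n) = 0" by (rule a0[rule_format])
    moreover have "{k\<in>{1..N}. \<alpha>' k = \<alpha>' n} = {n}"
    proof (intro set_eqI iffI)
      fix x assume "x \<in> {k\<in>{1..N}. \<alpha>' k = \<alpha>' n}"
      then have "x \<in> {1..N}" "\<alpha>' x = \<alpha>' n" by simp_all
      then have "x = n" using inj_onD[OF A(6), of x n] n by simp
      then show "x \<in> {n}" by simp
    next
      fix x assume "x \<in> {n}"
      then show "x \<in> {k\<in>{1..N}. \<alpha>' k = \<alpha>' n}" using n by simp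
    qed
    ultimately have e: "sum c {m\<in>{1..N}. \<alpha> m = \<alpha>' n} = c' n" unfolding a_def by simp
    have "c' n \<noteq> 0" using A(8) n by blast
    then have "{m\<in>{1..N}. \<alpha> m = \<alpha>' n} \<noteq> {}" by (metis e sum.empty)
    then obtain m where m: "m \<in> {1..N}" "\<alpha> m = \<alpha>' n" by auto
    have kk: "k = m" if "k \<in> {1..N}" "\<alpha> k = \<alpha>' n" for k
      using inj_onD[OF A(2), of k m] that m by simp
    have se: "{k\<in>{1..N}. \<alpha> k = \<alpha>' n} = {m}"
    proof (intro set_eqI iffI)
      fix x assume "x \<in> {k\<in>{1..N}. \<alpha> k = \<alpha>' n}"
      then have "x \<in> {1..N}" "\<alpha> x = \<alpha>' n" by simp_all
      then have "x = m" by (rule kk)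
      then show "x \<in> {m}" by simp
    next
      fix x assume "x \<in> {m}"
      then show "x \<in> {k\<in>{1..N}. \<alpha> k = \<alpha>' n}" using m by simp
    qed
    have "c m = c' n" using e unfolding se by simp
    then show ?thesis using m by (intro bexI[of _ m] conjI)
  qed
  define \<sigma> where "\<sigma> n = (SOME m. m \<in> {1..N} \<and> \<alpha> m = \<alpha>' n \<and> c m = c' n)" for n
  have \<sigma>: "\<sigma> n \<in> {1..N} \<and> \<alpha> (\<sigma> n) = \<alpha>' n \<and> c (\<sigma> n) = c' n" if "n \<in> {1..N}" for n
  proof -
    have "\<exists>m. m \<in> {1..N} \<and> \<alpha> m = \<alpha>' n \<and> c m = c' n" using key[OF that] by blast
    from someI_ex[OF this] show ?thesis unfolding \<sigma>_def .
  qed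
  have inj\<sigma>: "inj_on \<sigma> {1..N}"
  proof (rule inj_onI)
    fix x y assume "x \<in> {1..N}" "y \<in> {1..N}" "\<sigma> x = \<sigma> y"
    have "\<alpha>' x = \<alpha> (\<sigma> x)" using \<sigma>[OF \<open>x \<in> {1..N}\<close>] by simp
    also have "\<dots> = \<alpha> (\<sigma> y)" using \<open>\<sigma> x = \<sigma> y\<close> by simp
    also have "\<dots> = \<alpha>' y" using \<sigma>[OF \<open>y \<in> {1..N}\<close>] by simp
    finally have "\<alpha>' x = \<alpha>' y" .
    then show "x = y" using inj_onD[OF A(6)] \<open>x \<in> {1..N}\<close> \<open>y \<in> {1..N}\<close> by blast
  qed
  have im: "\<sigma> ` {1..N} \<subseteq> {1..N}" using \<sigma> by auto
  have "bij_betw \<sigma> {1..N} {1..N}"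
    unfolding bij_betw_def using inj\<sigma> endo_inj_surj[OF _ im inj\<sigma>] by simp
  moreover have "\<forall>n\<in>{1..N}. c' n = c (\<sigma> n) \<and> \<alpha>' n = \<alpha> (\<sigma> n)" using \<sigma> by simp
  ultimately show ?thesis by blast
qed

end
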